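(* Let $R$ be the semiring $\mathbb{N}[T_1,T_2,T_3,T_4]/\langle T_1T_4\sim T_2T_3+1\rangle$, i.e. the quotient of the polynomial semiring over $\mathbb{N}$ by the smallest congruence containing the relation $T_1T_4\sim T_2T_3+1$, and let $A\subset R$ be the multiplicative subset consisting of $0$ and the images of all monomials $T_1^{e_1}T_2^{e_2}T_3^{e_3}T_4^{e_4}$ ($e_i\geq 0$). Let $B=(R,A)$ be the corresponding blueprint. Then the prime $k$-ideals of $B$ are exactly the following seven sets: $\{0\}$, $(T_1)$, $(T_2)$, $(T_3)$, $(T_4)$, $(T_1,T_4)$ and $(T_2,T_3)$, where $(T_i)_{i\in I}$ denotes the monoid ideal of $A$ generated by $\{T_i: i\in I\}$. In particular, $\operatorname{Spec}B$ has exactly seven points, its closed points being $(T_1,T_4)$ and $(T_2,T_3)$.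
   Context: A semiring is a set with commutative associative addition with neutral element $0$ and commutative associative multiplication with neutral element $1$, with $0$ absorbing and multiplication distributing over addition (no additive inverses required). A congruence on a semiring is an equivalence relation compatible with addition and multiplication. A blueprint is a pair $B=(R,A)$ of a semiring $R=B^+$ and a multiplicative subset $A=B^\bullet$ of $R$ containing $0$ and $1$ that generates $R$ as a semiring. An ideal of the monoid $B^\bullet$ is a subset $I$ with $0\in I$ and $ab\in I$ for all $a\in I$, $b\in B^\bullet$; the ideal generated by a subset is the smallest ideal containing it. A $k$-ideal of $B$ is an ideal $I$ of $B^\bullet$ such that $c\in I$ whenever $c\in B^\bullet$ and there are $a_1,\dots,a_n,b_1,\dots,b_m\in I$ with $\sum a_i+c=\sum b_j$ in $B^+$. A $k$-ideal $\mathfrak p$ is prime if $B^\bullet\setminus\mathfrak p$ contains $1$ and is closed under multiplication. $\operatorname{Spec}B$ is the set of prime $k$-ideals with the topology generated by the sets $U_h=\{\mathfrak p: h\notin\mathfrak p\}$, $h\in B^\bullet$. *)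

theory Defs
  imports "HOL-Library.Poly_Mapping" "HOL-Analysis.Analysis"
begin

text \<open>A blueprint is given by an ambient semiring (a type of class comm_semiring_0 with a
  commutative multiplicative unit; the axiom 0 \<noteq> 1 is not required, matching the paper's notion)
  together with a multiplicative subset A (the monoid B-bullet).\<close>

definition monoid_ideal :: "'r::{comm_semiring_0, comm_monoid_mult} set \<Rightarrow> 'r set \<Rightarrow> bool" where
  "monoid_ideal A I \<longleftrightarrow> I \<subseteq> A \<and> 0 \<in> I \<and> (\<forall>a\<in>I. \<forall>b\<in>A. a * b \<in> I)"

definition ideal_gen :: "'r::{comm_semiring_0, comm_monoid_mult} set \<Rightarrow> 'r set \<Rightarrow> 'r set" where
  "ideal_gen A S = \<Inter>{I. monoid_ideal A I \<and> S \<subseteq> I}"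

definition k_ideal :: "'r::{comm_semiring_0, comm_monoid_mult} set \<Rightarrow> 'r set \<Rightarrow> bool" where
  "k_ideal A I \<longleftrightarrow> monoid_ideal A I \<and>
     (\<forall>c\<in>A. (\<exists>as bs. set as \<subseteq> I \<and> set bs \<subseteq> I \<and> sum_list as + c = sum_list bs) \<longrightarrow> c \<in> I)"

definition prime_k_ideal :: "'r::{comm_semiring_0, comm_monoid_mult} set \<Rightarrow> 'r set \<Rightarrow> bool" where
  "prime_k_ideal A p \<longleftrightarrow> k_ideal A p \<and> 1 \<in> A - p \<and>
     (\<forall>a\<in>A - p. \<forall>b\<in>A - p. a * b \<in> A - p)"

definition Spec :: "'r::{comm_semiring_0, comm_monoid_mult} set \<Rightarrow> 'r set set" where
  "Spec A = {p. prime_k_ideal A p}"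

definition spec_topology :: "'r::{comm_semiring_0, comm_monoid_mult} set \<Rightarrow> 'r set topology" where
  "spec_topology A = topology_generated_by ((\<lambda>h. {p \<in> Spec A. h \<notin> p}) ` A)"

datatype var = V1 | V2 | V3 | V4

type_synonym poly = "(var \<Rightarrow>\<^sub>0 nat) \<Rightarrow>\<^sub>0 nat"

definition Tvar :: "var \<Rightarrow> poly" where
  "Tvar v = Poly_Mapping.single (Poly_Mapping.single v 1) 1"

inductive rel :: "poly \<Rightarrow> poly \<Rightarrow> bool" where
  base: "rel (Tvar V1 * Tvar V4) (Tvar V2 * Tvar V3 + 1)"
| refl: "rel p p"
| sym: "rel p q \<Longrightarrow> rel q p"
| trans: "rel p q \<Longrightarrow> rel q r \<Longrightarrow> rel p r"
| add: "rel p q \<Longrightarrow> rel r s \<Longrightarrow> rel (p + r) (q + s)"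
| mult: "rel p q \<Longrightarrow> rel r s \<Longrightarrow> rel (p * r) (q * s)"

lemma equivp_rel: "equivp rel"
  by (intro equivpI reflpI sympI transpI) (auto intro: rel.intros)

lemma eq_rel: "x = y \<Longrightarrow> rel x y"
  by (simp add: rel.refl)

quotient_type R = poly / rel
  by (rule equivp_rel)

instantiation R :: "{comm_semiring_0, comm_monoid_mult}"
begin

lift_definition zero_R :: R is 0 .
lift_definition one_R :: R is 1 .
lift_definition plus_R :: "R \<Rightarrow> R \<Rightarrow> R" is "(+)" by (rule rel.add)
lift_definition times_R :: "R \<Rightarrow> R \<Rightarrow> R" is "(*)" by (rule rel.mult)

instance
proof
  fix a b c :: R
  show "a * b * c = a * (b * c)" by transfer (rule eq_rel, rule mult.assoc)
  show "a * b = b * a" by transfer (rule eq_rel, rule mult.commute)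
  show "1 * a = a" by transfer (rule eq_rel, simp)
  show "a + b + c = a + (b + c)" by transfer (rule eq_rel, rule add.assoc)
  show "a + b = b + a" by transfer (rule eq_rel, rule add.commute)
  show "0 + a = a" by transfer (rule eq_rel, simp)
  show "0 * a = 0" by transfer (rule eq_rel, simp)
  show "a * 0 = 0" by transfer (rule eq_rel, simp)
  show "(a + b) * c = a * c + b * c" by transfer (rule eq_rel, rule distrib_right)
qed

end

lift_definition T :: "var \<Rightarrow> R" is Tvar .

definition A_R :: "R set" where
  "A_R = insert 0 (range (\<lambda>e. abs_R (Poly_Mapping.single e 1)))"

end

theory Submission imports Defs begin

definition mev :: "(var \<Rightarrow> int) \<Rightarrow> (var \<Rightarrow>\<^sub>0 nat) \<Rightarrow> int" where
  "mev v m = v V1 ^ Poly_Mapping.lookup m V1 * v V2 ^ Poly_Mapping.lookup m V2 * v V3 ^ Poly_Mapping.lookup m V3 * v V4 ^ Poly_Mapping.lookup m V4"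

definition pev :: "(var \<Rightarrow> int) \<Rightarrow> poly \<Rightarrow> int" where
  "pev v p = (\<Sum>m\<in>Poly_Mapping.keys p. of_nat (Poly_Mapping.lookup p m) * mev v m)"

lemma mev_add: "mev v (a + b) = mev v a * mev v b"
  by (simp add: mev_def lookup_add power_add)

lemma mev_zero: "mev v 0 = 1"
  by (simp add: mev_def)

lemma pev_add: "pev v (p + q) = pev v p + pev v q"
  unfolding pev_def
  by (rule setsum_keys_plus_distrib) (auto simp: algebra_simps)

lemma pev_zero: "pev v 0 = 0" by (simp add: pev_def)

lemma pev_single: "pev v (Poly_Mapping.single m c) = of_nat c * mev v m"
  by (simp add: pev_def)

lemma plus_single_induct:
  assumes "P 0" "\<And>f a b. P f \<Longrightarrow> P (f + Poly_Mapping.single a b)"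
  shows "P (p::poly)"
proof (induction p rule: update_induct)
  case const thus ?case using assms(1) .
next
  case (update f a b)
  have "Poly_Mapping.update a b f = f + Poly_Mapping.single a b"
    using update(1) by (intro poly_mapping_eqI) (auto simp: lookup_update lookup_add lookup_single in_keys_iff when_def)
  thus ?case using assms(2) update(3) by simp
qed

lemma pev_mult_single: "pev v (Poly_Mapping.single a b * q) = pev v (Poly_Mapping.single a b) * pev v q"
proof (induction q rule: plus_single_induct)
  case 1 thus ?case by (simp add: pev_zero)
next
  case (2 f c d)
  thus ?case by (simp add: distrib_left pev_add mult_single pev_single mev_add)
qed

lemma pev_mult: "pev v (p * q) = pev v p * pev v q"
proof (induction p rule: plus_single_induct)
  case 1 thus ?case by (simp add: pev_zero)
next
  case (2 f c d)
  thus ?case by (simp add: distrib_right pev_add pev_mult_single)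
qed

lemma pev_one: "pev v 1 = 1"
  by (metis single_one pev_single mev_zero of_nat_1 mult_1)

lemma pev_Tvar: "pev v (Tvar i) = v i"
  by (cases i) (simp_all add: Tvar_def pev_single mev_def lookup_single)

definition good :: "(var \<Rightarrow> int) \<Rightarrow> bool" where
  "good v \<longleftrightarrow> v V1 * v V4 = v V2 * v V3 + 1"

lemma pev_rel: "rel p q \<Longrightarrow> good v \<Longrightarrow> pev v p = pev v q"
  by (induction rule: rel.induct) (auto simp: pev_add pev_mult pev_one pev_Tvar good_def)

lift_definition ev :: "(var \<Rightarrow> int) \<Rightarrow> R \<Rightarrow> int" is
  "\<lambda>v p. if good v then pev v p else 0"
  using pev_rel by auto


lemma all_var: "(\<forall>i. P i) = (P V1 \<and> P V2 \<and> P V3 \<and> P V4)"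
  by (metis var.exhaust)
lemma ex_var: "(\<exists>i. P i) = (P V1 \<or> P V2 \<or> P V3 \<or> P V4)"
  by (metis var.exhaust)

lemma mev_zero_iff: "mev v e = 0 \<longleftrightarrow> (\<exists>i. v i = 0 \<and> 0 < Poly_Mapping.lookup e i)"
  unfolding ex_var by (auto simp: mev_def)

definition M :: "(var \<Rightarrow>\<^sub>0 nat) \<Rightarrow> R" where "M e = abs_R (Poly_Mapping.single e 1)"

lemma M_abs: "abs_R (Poly_Mapping.single e 1) = M e"
  by (simp add: M_def)

lemma A_R_alt: "A_R = insert 0 (range M)"
  unfolding A_R_def M_abs by simp

lemma ev_add: "ev v (x + y) = ev v x + ev v y"
  by transfer (simp add: pev_add)
lemma ev_mult: "ev v (x * y) = ev v x * ev v y"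
  by transfer (simp add: pev_mult)
lemma ev_zero: "ev v 0 = 0"
  by transfer (simp add: pev_zero)
lemma ev_one: "good v \<Longrightarrow> ev v 1 = 1"
  by transfer (simp add: pev_one)
lemma ev_T: "good v \<Longrightarrow> ev v (T i) = v i"
  by transfer (simp add: pev_Tvar)
lemma ev_M: "good v \<Longrightarrow> ev v (M e) = mev v e"
  by (simp add: M_def ev.abs_eq pev_single)

lemma M_mult: "M a * M b = M (a + b)"
  by (simp add: M_def times_R.abs_eq mult_single)
lemma M_zero: "M 0 = 1"
  unfolding M_def single_one one_R_def ..
lemma T_M: "T i = M (Poly_Mapping.single i 1)"
  by (simp add: M_def T_def Tvar_def)
lemma rel_R: "T V1 * T V4 = T V2 * T V3 + 1"
  by transfer (rule rel.base)

lemma M_split: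
  assumes "0 < Poly_Mapping.lookup e i"
  shows "M e = T i * M (e - Poly_Mapping.single i 1)"
proof -
  have "e = Poly_Mapping.single i 1 + (e - Poly_Mapping.single i 1)"
    using assms by (intro poly_mapping_eqI) (auto simp: lookup_add lookup_minus lookup_single when_def)
  then show ?thesis by (metis T_M M_mult)
qed

lemma one_A: "1 \<in> A_R" by (metis A_R_alt M_zero insertI2 rangeI)
lemma T_A: "T i \<in> A_R" by (simp add: A_R_alt T_M)
lemma M_A: "M e \<in> A_R" by (simp add: A_R_alt)
lemma zero_A: "0 \<in> A_R" by (simp add: A_R_alt)
lemma mult_A: "x \<in> A_R \<Longrightarrow> y \<in> A_R \<Longrightarrow> x * y \<in> A_R"
  by (auto simp: A_R_alt M_mult)

definition Z :: "(var \<Rightarrow> int) \<Rightarrow> R set" where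
  "Z v = {x \<in> A_R. ev v x = 0}"

lemma ev_sum_list: "set as \<subseteq> Z v \<Longrightarrow> ev v (sum_list as) = 0"
  by (induction as) (auto simp: ev_add ev_zero Z_def)

lemma prime_Z: assumes "good v" shows "prime_k_ideal A_R (Z v)"
  unfolding prime_k_ideal_def k_ideal_def monoid_ideal_def
proof (intro conjI ballI impI)
  show "Z v \<subseteq> A_R" by (auto simp: Z_def)
  show "0 \<in> Z v" by (simp add: Z_def zero_A ev_zero)
  show "a * b \<in> Z v" if "a \<in> Z v" "b \<in> A_R" for a b
    using that by (auto simp: Z_def mult_A ev_mult)
  show "c \<in> Z v" if "c \<in> A_R" "\<exists>as bs. set as \<subseteq> Z v \<and> set bs \<subseteq> Z v \<and> sum_list as + c = sum_list bs" for c
  proof -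
    from that obtain as bs where "set as \<subseteq> Z v" "set bs \<subseteq> Z v" "sum_list as + c = sum_list bs" by blast
    then have "ev v (sum_list as + c) = ev v (sum_list bs)" by simp
    then show ?thesis using that(1) \<open>set as \<subseteq> Z v\<close> \<open>set bs \<subseteq> Z v\<close>
      by (simp add: ev_add ev_sum_list Z_def)
  qed
  show "1 \<in> A_R - Z v" using assms by (simp add: Z_def one_A ev_one)
  show "a * b \<in> A_R - Z v" if "a \<in> A_R - Z v" "b \<in> A_R - Z v" for a b
    using that by (auto simp: Z_def mult_A ev_mult)
qed

lemma Z_char: assumes "good v"
  shows "x \<in> Z v \<longleftrightarrow> x = 0 \<or> (\<exists>e i. x = M e \<and> v i = 0 \<and> 0 < Poly_Mapping.lookup e i)"
  using assms by (auto simp: Z_def A_R_alt ev_zero ev_M mev_zero_iff)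

lemma Z_sub: "good v \<Longrightarrow> good w \<Longrightarrow> (\<forall>i. v i = 0 \<longrightarrow> w i = 0) \<Longrightarrow> Z v \<subseteq> Z w"
  by (auto simp: Z_char)

lemma T_Z: "good v \<Longrightarrow> T i \<in> Z v \<longleftrightarrow> v i = 0"
  by (simp add: Z_def T_A ev_T)

lemma Z_eq_iff: "good v \<Longrightarrow> good w \<Longrightarrow> Z v = Z w \<longleftrightarrow> (\<forall>i. (v i = 0) = (w i = 0))"
  by (metis T_Z Z_sub subset_antisym)

lemma ig_least: "monoid_ideal A I \<Longrightarrow> S \<subseteq> I \<Longrightarrow> ideal_gen A S \<subseteq> I"
  by (auto simp: ideal_gen_def)

lemma ig_mem: "s \<in> S \<Longrightarrow> y \<in> A \<Longrightarrow> s * y \<in> ideal_gen A S"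
  by (auto simp: ideal_gen_def monoid_ideal_def)

lemma ig_zero: "0 \<in> ideal_gen A S"
  by (auto simp: ideal_gen_def monoid_ideal_def)

lemma Z_ig:
  assumes g: "good v" and S1: "\<And>s. s \<in> S \<Longrightarrow> \<exists>i. s = T i \<and> v i = 0"
    and S2: "\<And>i. v i = 0 \<Longrightarrow> T i \<in> S"
  shows "Z v = ideal_gen A_R S"
proof
  show "ideal_gen A_R S \<subseteq> Z v"
    apply (rule ig_least)
    using prime_Z[OF g] apply (simp add: prime_k_ideal_def k_ideal_def)
    using S1 T_Z[OF g] by blast
  show "Z v \<subseteq> ideal_gen A_R S"
  proof
    fix x assume "x \<in> Z v"
    then consider "x = 0" | e i where "x = M e" "v i = 0" "0 < Poly_Mapping.lookup e i"
      using Z_char[OF g] by blast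
    then show "x \<in> ideal_gen A_R S"
    proof cases
      case 1 thus ?thesis by (simp add: ig_zero)
    next
      case 2 thus ?thesis using M_split[OF 2(3)] S2 ig_mem M_A by metis
    qed
  qed
qed


definition deg :: "(var \<Rightarrow>\<^sub>0 nat) \<Rightarrow> nat" where
  "deg e = Poly_Mapping.lookup e V1 + Poly_Mapping.lookup e V2 + Poly_Mapping.lookup e V3 + Poly_Mapping.lookup e V4"

lemma deg0: "deg e = 0 \<Longrightarrow> e = 0"
  unfolding deg_def by (intro poly_mapping_eqI) (metis add_is_0 lookup_zero var.exhaust)

lemma lookup_pos: "0 < Poly_Mapping.lookup e i \<Longrightarrow> deg (e - Poly_Mapping.single i 1) < deg e"
  by (cases i) (auto simp: deg_def lookup_minus lookup_single when_def)

lemma prime_M: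
  assumes p: "prime_k_ideal A_R p"
  shows "M e \<in> p \<longleftrightarrow> (\<exists>i. 0 < Poly_Mapping.lookup e i \<and> T i \<in> p)"
proof
  have mi: "monoid_ideal A_R p" using p by (simp add: prime_k_ideal_def k_ideal_def)
  show "\<exists>i. 0 < Poly_Mapping.lookup e i \<and> T i \<in> p" if "M e \<in> p"
    using that
  proof (induction "deg e" arbitrary: e rule: less_induct)
    case less
    show ?case
    proof (cases "deg e = 0")
      case True
      then have "e = 0" using deg0 by blast
      then have "M e = 1" using M_zero by simp
      then show ?thesis using less.prems p by (simp add: prime_k_ideal_def)
    next
      case False
      then obtain i where i: "0 < Poly_Mapping.lookup e i"
        unfolding deg_def by (metis add_is_0 not_gr_zero)
      show ?thesis
      proof (cases "T i \<in> p")
        case True then show ?thesis using i by blast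
      next
        case False
        have "M (e - Poly_Mapping.single i 1) \<in> p"
        proof (rule ccontr)
          assume "M (e - Poly_Mapping.single i 1) \<notin> p"
          then have "T i * M (e - Poly_Mapping.single i 1) \<in> A_R - p"
            using p False T_A M_A by (simp add: prime_k_ideal_def)
          then show False using less.prems M_split[OF i] by simp
        qed
        from less.hyps[OF lookup_pos[OF i] this] obtain j where
          "0 < Poly_Mapping.lookup (e - Poly_Mapping.single i 1) j" "T j \<in> p" by blast
        then have "0 < Poly_Mapping.lookup e j" "T j \<in> p" by (simp_all add: lookup_minus)
        then show ?thesis by blast
      qed
    qed
  qed
  show "M e \<in> p" if "\<exists>i. 0 < Poly_Mapping.lookup e i \<and> T i \<in> p"
  proof -
    from that obtain i where i: "0 < Poly_Mapping.lookup e i" "T i \<in> p" by blast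
    have "T i * M (e - Poly_Mapping.single i 1) \<in> p"
      using mi i(2) M_A unfolding monoid_ideal_def by blast
    then show ?thesis using M_split[OF i(1)] by simp
  qed
qed

lemma prime_eq_Z:
  assumes p: "prime_k_ideal A_R p" and g: "good v" and vp: "\<And>i. v i = 0 \<longleftrightarrow> T i \<in> p"
  shows "p = Z v"
proof
  have sub: "p \<subseteq> A_R" and z: "0 \<in> p" using p by (auto simp: prime_k_ideal_def k_ideal_def monoid_ideal_def)
  show "p \<subseteq> Z v"
  proof
    fix x assume "x \<in> p"
    then have "x = 0 \<or> (\<exists>e. x = M e)" using sub A_R_alt by auto
    then show "x \<in> Z v"
    proof
      assume "x = 0" then show ?thesis using Z_char[OF g] by simp
    next
      assume "\<exists>e. x = M e"
      then obtain e where e: "x = M e" by blast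
      then obtain i where "0 < Poly_Mapping.lookup e i" "T i \<in> p"
        using \<open>x \<in> p\<close> prime_M[OF p] by blast
      then show ?thesis using e vp Z_char[OF g] by blast
    qed
  qed
  show "Z v \<subseteq> p"
  proof
    fix x assume "x \<in> Z v"
    then consider "x = 0" | e i where "x = M e" "v i = 0" "0 < Poly_Mapping.lookup e i"
      using Z_char[OF g] by blast
    then show "x \<in> p"
    proof cases
      case 1 then show ?thesis using z by simp
    next
      case 2 then show ?thesis using prime_M[OF p] vp by blast
    qed
  qed
qed

lemma prime_constraint:
  assumes p: "prime_k_ideal A_R p"
  shows "\<not> ((T V1 \<in> p \<or> T V4 \<in> p) \<and> (T V2 \<in> p \<or> T V3 \<in> p))"
proof
  assume H: "(T V1 \<in> p \<or> T V4 \<in> p) \<and> (T V2 \<in> p \<or> T V3 \<in> p)"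
  have mi: "monoid_ideal A_R p" and k: "\<forall>c\<in>A_R. (\<exists>as bs. set as \<subseteq> p \<and> set bs \<subseteq> p \<and> sum_list as + c = sum_list bs) \<longrightarrow> c \<in> p"
    using p by (auto simp: prime_k_ideal_def k_ideal_def)
  have mul: "\<And>a b. a \<in> p \<Longrightarrow> b \<in> A_R \<Longrightarrow> a * b \<in> p" using mi unfolding monoid_ideal_def by blast
  have a: "T V1 * T V4 \<in> p"
  proof (cases "T V1 \<in> p")
    case True then show ?thesis using mul T_A by blast
  next
    case False then have "T V4 * T V1 \<in> p" using H mul T_A by blast
    then show ?thesis by (simp add: mult.commute)
  qed
  have b: "T V2 * T V3 \<in> p"
  proof (cases "T V2 \<in> p")
    case True then show ?thesis using mul T_A by blast
  next
    case False then have "T V3 * T V2 \<in> p" using H mul T_A by blast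
    then show ?thesis by (simp add: mult.commute)
  qed
  have "set [T V2 * T V3] \<subseteq> p \<and> set [T V1 * T V4] \<subseteq> p \<and> sum_list [T V2 * T V3] + 1 = sum_list [T V1 * T V4]"
    using rel_R a b by simp
  then have "1 \<in> p" using k one_A by blast
  then show False using p by (simp add: prime_k_ideal_def)
qed

definition "v0 = case_var 2 1 1 (1::int)"
definition "v1 = case_var 0 1 (-1) (1::int)"
definition "v4 = case_var 1 1 (-1) (0::int)"
definition "v14 = case_var 0 1 (-1) (0::int)"
definition "v2 = case_var 1 0 1 (1::int)"
definition "v3 = case_var 1 1 0 (1::int)"
definition "v23 = case_var 1 0 0 (1::int)"

lemmas vdefs = v0_def v1_def v4_def v14_def v2_def v3_def v23_def

lemma goods: "good v0" "good v1" "good v4" "good v14" "good v2" "good v3" "good v23"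
  by (simp_all add: good_def vdefs)

lemma Z0: "{0} = Z v0"
  using Z_char[OF goods(1)] by (auto simp: v0_def ex_var)

lemma Zs0: "Z v1 = ideal_gen A_R {T V1}"
  by (rule Z_ig) (auto simp: good_def vdefs ex_var split: var.splits)

lemma Zs1: "Z v4 = ideal_gen A_R {T V4}"
  by (rule Z_ig) (auto simp: good_def vdefs ex_var split: var.splits)

lemma Zs2: "Z v14 = ideal_gen A_R {T V1, T V4}"
  by (rule Z_ig) (auto simp: good_def vdefs ex_var split: var.splits)

lemma Zs3: "Z v2 = ideal_gen A_R {T V2}"
  by (rule Z_ig) (auto simp: good_def vdefs ex_var split: var.splits)

lemma Zs4: "Z v3 = ideal_gen A_R {T V3}"
  by (rule Z_ig) (auto simp: good_def vdefs ex_var split: var.splits)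

lemma Zs5: "Z v23 = ideal_gen A_R {T V2, T V3}"
  by (rule Z_ig) (auto simp: good_def vdefs ex_var split: var.splits)

lemma Spec_eq: "Spec A_R = {Z v0, Z v1, Z v2, Z v3, Z v4, Z v14, Z v23}"
proof
  show "{Z v0, Z v1, Z v2, Z v3, Z v4, Z v14, Z v23} \<subseteq> Spec A_R"
    using prime_Z goods by (auto simp: Spec_def)
  show "Spec A_R \<subseteq> {Z v0, Z v1, Z v2, Z v3, Z v4, Z v14, Z v23}"
  proof
    fix p assume "p \<in> Spec A_R"
    then have p: "prime_k_ideal A_R p" by (simp add: Spec_def)
    note c = prime_constraint[OF p]
    have e: "p = Z v" if "good v" "v V1 = 0 \<longleftrightarrow> T V1 \<in> p" "v V2 = 0 \<longleftrightarrow> T V2 \<in> p"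
      "v V3 = 0 \<longleftrightarrow> T V3 \<in> p" "v V4 = 0 \<longleftrightarrow> T V4 \<in> p" for v
    proof (rule prime_eq_Z[OF p that(1)])
      fix i show "v i = 0 \<longleftrightarrow> T i \<in> p" using that(2-5) by (cases i) simp_all
    qed
    have ev0: "T V1 \<notin> p \<Longrightarrow> T V2 \<notin> p \<Longrightarrow> T V3 \<notin> p \<Longrightarrow> T V4 \<notin> p \<Longrightarrow> p = Z v0"
      by (rule e[OF goods(1)]) (simp_all add: v0_def)
    have ev1: "T V1 \<in> p \<Longrightarrow> T V2 \<notin> p \<Longrightarrow> T V3 \<notin> p \<Longrightarrow> T V4 \<notin> p \<Longrightarrow> p = Z v1"
      by (rule e[OF goods(2)]) (simp_all add: v1_def)
    have ev4: "T V1 \<notin> p \<Longrightarrow> T V2 \<notin> p \<Longrightarrow> T V3 \<notin> p \<Longrightarrow> T V4 \<in> p \<Longrightarrow> p = Z v4"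
      by (rule e[OF goods(3)]) (simp_all add: v4_def)
    have ev14: "T V1 \<in> p \<Longrightarrow> T V2 \<notin> p \<Longrightarrow> T V3 \<notin> p \<Longrightarrow> T V4 \<in> p \<Longrightarrow> p = Z v14"
      by (rule e[OF goods(4)]) (simp_all add: v14_def)
    have ev2: "T V1 \<notin> p \<Longrightarrow> T V2 \<in> p \<Longrightarrow> T V3 \<notin> p \<Longrightarrow> T V4 \<notin> p \<Longrightarrow> p = Z v2"
      by (rule e[OF goods(5)]) (simp_all add: v2_def)
    have ev3: "T V1 \<notin> p \<Longrightarrow> T V2 \<notin> p \<Longrightarrow> T V3 \<in> p \<Longrightarrow> T V4 \<notin> p \<Longrightarrow> p = Z v3"
      by (rule e[OF goods(6)]) (simp_all add: v3_def)
    have ev23: "T V1 \<notin> p \<Longrightarrow> T V2 \<in> p \<Longrightarrow> T V3 \<in> p \<Longrightarrow> T V4 \<notin> p \<Longrightarrow> p = Z v23"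
      by (rule e[OF goods(7)]) (simp_all add: v23_def)
    show "p \<in> {Z v0, Z v1, Z v2, Z v3, Z v4, Z v14, Z v23}"
    proof (cases "T V1 \<in> p \<or> T V4 \<in> p")
      case True
      then have n: "T V2 \<notin> p" "T V3 \<notin> p" using c by blast+
      show ?thesis
      proof (cases "T V1 \<in> p")
        case t1: True
        show ?thesis
        proof (cases "T V4 \<in> p")
          case True then show ?thesis using ev14[OF t1 n True] by simp
        next
          case False then show ?thesis using ev1[OF t1 n False] by simp
        qed
      next
        case f1: False
        then have "T V4 \<in> p" using True by blast
        then show ?thesis using ev4[OF f1 n] by simp
      qed
    next
      case False
      then have n1: "T V1 \<notin> p" and n4: "T V4 \<notin> p" by blast+
      show ?thesis
      proof (cases "T V2 \<in> p")
        case t2: True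
        show ?thesis
        proof (cases "T V3 \<in> p")
          case True then show ?thesis using ev23[OF n1 t2 True n4] by simp
        next
          case False then show ?thesis using ev2[OF n1 t2 False n4] by simp
        qed
      next
        case f2: False
        show ?thesis
        proof (cases "T V3 \<in> p")
          case True then show ?thesis using ev3[OF n1 f2 True n4] by simp
        next
          case False then show ?thesis using ev0[OF n1 f2 False n4] by simp
        qed
      qed
    qed
  qed
qed

lemma vval:
  "v0 V1 = 2"
  "v0 V2 = 1"
  "v0 V3 = 1"
  "v0 V4 = 1"
  "v1 V1 = 0"
  "v1 V2 = 1"
  "v1 V3 = - 1"
  "v1 V4 = 1"
  "v4 V1 = 1"
  "v4 V2 = 1"
  "v4 V3 = - 1"
  "v4 V4 = 0"
  "v14 V1 = 0"
  "v14 V2 = 1"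
  "v14 V3 = - 1"
  "v14 V4 = 0"
  "v2 V1 = 1"
  "v2 V2 = 0"
  "v2 V3 = 1"
  "v2 V4 = 1"
  "v3 V1 = 1"
  "v3 V2 = 1"
  "v3 V3 = 0"
  "v3 V4 = 1"
  "v23 V1 = 1"
  "v23 V2 = 0"
  "v23 V3 = 0"
  "v23 V4 = 1"
  by (simp_all add: vdefs)

lemma Zneq:
  "Z v0 \<noteq> Z v1"
  "Z v0 \<noteq> Z v2"
  "Z v0 \<noteq> Z v3"
  "Z v0 \<noteq> Z v4"
  "Z v0 \<noteq> Z v14"
  "Z v0 \<noteq> Z v23"
  "Z v1 \<noteq> Z v2"
  "Z v1 \<noteq> Z v3"
  "Z v1 \<noteq> Z v4"
  "Z v1 \<noteq> Z v14"
  "Z v1 \<noteq> Z v23"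
  "Z v2 \<noteq> Z v3"
  "Z v2 \<noteq> Z v4"
  "Z v2 \<noteq> Z v14"
  "Z v2 \<noteq> Z v23"
  "Z v3 \<noteq> Z v4"
  "Z v3 \<noteq> Z v14"
  "Z v3 \<noteq> Z v23"
  "Z v4 \<noteq> Z v14"
  "Z v4 \<noteq> Z v23"
  "Z v14 \<noteq> Z v23"
  by (simp_all add: Z_eq_iff goods all_var vval)

lemma card7: "card (Spec A_R) = 7"
  unfolding Spec_eq by (simp add: Zneq)

abbreviation "Bs \<equiv> (\<lambda>h. {p \<in> Spec A_R. h \<notin> p}) ` A_R"

lemma topsp: "topspace (spec_topology A_R) = Spec A_R"
proof -
  have "\<Union>Bs = Spec A_R"
  proof
    show "\<Union>Bs \<subseteq> Spec A_R" by auto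
    show "Spec A_R \<subseteq> \<Union>Bs"
    proof
      fix p assume "p \<in> Spec A_R"
      then have "p \<in> {q \<in> Spec A_R. 1 \<notin> q}" by (auto simp: Spec_def prime_k_ideal_def)
      then show "p \<in> \<Union>Bs" using one_A by blast
    qed
  qed
  then show ?thesis unfolding spec_topology_def by simp
qed

lemma closed_iff: "closedin (spec_topology A_R) {q} \<longleftrightarrow> q \<in> Spec A_R \<and> generate_topology_on Bs (Spec A_R - {q})"
  unfolding closedin_def topsp unfolding spec_topology_def openin_topology_generated_by_iff by simp

lemma basic_open: "generate_topology_on Bs {p \<in> Spec A_R. T i \<notin> p}"
  by (rule generate_topology_on.Basis) (use T_A in blast)

lemma gen_spec:
  assumes "generate_topology_on Bs U" "q \<subseteq> m" "q \<in> Spec A_R" "m \<in> U"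
  shows "q \<in> U"
  using assms by (induction rule: generate_topology_on.induct) auto

lemma not_closed:
  assumes "q \<subseteq> m" "q \<in> Spec A_R" "m \<in> Spec A_R" "q \<noteq> m"
  shows "\<not> closedin (spec_topology A_R) {q}"
proof
  assume "closedin (spec_topology A_R) {q}"
  then have "generate_topology_on Bs (Spec A_R - {q})" by (simp add: closed_iff)
  from gen_spec[OF this assms(1,2)] assms(3,4) show False by auto
qed

lemma closed14: "closedin (spec_topology A_R) {Z v14}"
proof -
  have "Spec A_R - {Z v14} = {p \<in> Spec A_R. T V1 \<notin> p} \<union> {p \<in> Spec A_R. T V4 \<notin> p}"
    unfolding Spec_eq by (auto simp: T_Z goods vval Zneq)
  moreover have "generate_topology_on Bs (\<Union>{{p \<in> Spec A_R. T V1 \<notin> p}, {p \<in> Spec A_R. T V4 \<notin> p}})"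
    by (rule generate_topology_on.UN) (use basic_open in auto)
  ultimately show ?thesis by (simp add: closed_iff Spec_eq)
qed

lemma closed23: "closedin (spec_topology A_R) {Z v23}"
proof -
  have "Spec A_R - {Z v23} = {p \<in> Spec A_R. T V2 \<notin> p} \<union> {p \<in> Spec A_R. T V3 \<notin> p}"
    unfolding Spec_eq by (auto simp: T_Z goods vval Zneq)
  moreover have "generate_topology_on Bs (\<Union>{{p \<in> Spec A_R. T V2 \<notin> p}, {p \<in> Spec A_R. T V3 \<notin> p}})"
    by (rule generate_topology_on.UN) (use basic_open in auto)
  ultimately show ?thesis by (simp add: closed_iff Spec_eq)
qed

lemma subs: "Z v0 \<subseteq> Z v14" "Z v1 \<subseteq> Z v14" "Z v4 \<subseteq> Z v14" "Z v2 \<subseteq> Z v23" "Z v3 \<subseteq> Z v23"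
  by (rule Z_sub; simp add: goods vval all_var)+

lemma closed_pts: "{p \<in> Spec A_R. closedin (spec_topology A_R) {p}} = {Z v14, Z v23}"
proof -
  have nc0: "\<not> closedin (spec_topology A_R) {Z v0}"
    by (rule not_closed[OF subs(1)]) (simp_all add: Spec_eq Zneq)
  have nc1: "\<not> closedin (spec_topology A_R) {Z v1}"
    by (rule not_closed[OF subs(2)]) (simp_all add: Spec_eq Zneq)
  have nc2: "\<not> closedin (spec_topology A_R) {Z v4}"
    by (rule not_closed[OF subs(3)]) (simp_all add: Spec_eq Zneq)
  have nc3: "\<not> closedin (spec_topology A_R) {Z v2}"
    by (rule not_closed[OF subs(4)]) (simp_all add: Spec_eq Zneq)
  have nc4: "\<not> closedin (spec_topology A_R) {Z v3}"
    by (rule not_closed[OF subs(5)]) (simp_all add: Spec_eq Zneq)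
  show ?thesis unfolding Spec_eq using nc0 nc1 nc2 nc3 nc4 closed14 closed23 by auto
qed

theorem mainTheorem1:
  shows "Spec A_R = {{0}, ideal_gen A_R {T V1}, ideal_gen A_R {T V2}, ideal_gen A_R {T V3},
                     ideal_gen A_R {T V4}, ideal_gen A_R {T V1, T V4}, ideal_gen A_R {T V2, T V3}}
       \<and> card (Spec A_R) = 7
       \<and> {p \<in> Spec A_R. closedin (spec_topology A_R) {p}}
           = {ideal_gen A_R {T V1, T V4}, ideal_gen A_R {T V2, T V3}}"
  unfolding Z0 Zs0[symmetric] Zs1[symmetric] Zs2[symmetric] Zs3[symmetric] Zs4[symmetric] Zs5[symmetric]
  using Spec_eq card7 closed_pts by simp

end
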